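(* Let $n\ge1$ and $\widetilde Z(n;\mathbf x,\mathbf y)=\big[\prod_{i=1}^n x_i^{n-1}y_i^{n-1}\big]Z(n;\mathbf x,\mathbf y)$, which is a polynomial in the $x_i,y_i$. Then \[ \widetilde Z(n;\mathbf x,\mathbf y)=\Big[\prod_{i=1}^n x_i^{2(n-1)}\Big]C(n)+(\text{terms of lower total degree in }x_1,\dots,x_n),\qquad C(n)=\prod_{i=1}^n\sigma(a^{2i}). \]
   Context: Notation: $\bar z=z^{-1}$, $\sigma(z)=z-z^{-1}$; $a$ is a fixed nonzero parameter. Vertex weights: at a vertex where a horizontal and a vertical line cross, the four incident edges are oriented with exactly two pointing in. Type 1: horizontal edges in, vertical out; type 2: horizontal out, vertical in; type 3: horizontal right, vertical up; type 4: horizontal left, vertical down; type 5: horizontal left, vertical up; type 6: horizontal right, vertical down. A vertex with spectral parameter $z$ has weight $\sigma(a^2)$ (types 1,2), $\sigma(az)$ (types 3,4), $\sigma(a\bar z)$ (types 5,6). $Z(n;\mathbf x,\mathbf y)$, $\mathbf x=(x_1,\dots,x_n)$, $\mathbf y=(y_1,\dots,y_n)$, is the sum over all states (orientations of internal edges satisfying the two-in rule at every vertex) of the product of vertex weights, on the $n\times n$ grid of vertices $(i,j)$ (row $i$ from the top, column $j$ from the left), vertex $(i,j)$ having parameter $x_i\bar y_j$, with horizontal boundary edges pointing into the grid and vertical boundary edges pointing out of it (domain-wall boundary). *)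

theory Defs
  imports Complex_Main
begin

definition sig :: "complex \<Rightarrow> complex" where
  "sig z = z - inverse z"

(* Edge orientations around a vertex:
   L = left horizontal edge points right (i.e. into the vertex),
   R = right horizontal edge points right (i.e. out of the vertex),
   U = upper vertical edge points up (i.e. out of the vertex),
   D = lower vertical edge points up (i.e. into the vertex). *)
definition ice :: "bool \<Rightarrow> bool \<Rightarrow> bool \<Rightarrow> bool \<Rightarrow> bool" where
  "ice L R U D \<longleftrightarrow> of_bool L + of_bool (\<not> R) + of_bool (\<not> U) + of_bool D = (2::nat)"

definition vweight :: "complex \<Rightarrow> complex \<Rightarrow> bool \<Rightarrow> bool \<Rightarrow> bool \<Rightarrow> bool \<Rightarrow> complex" where
  "vweight a z L R U D =
     (if (L \<and> \<not> R \<and> U \<and> \<not> D) \<or> (\<not> L \<and> R \<and> \<not> U \<and> D) then sig (a\<^sup>2)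
      else if (L \<and> R \<and> U \<and> D) \<or> (\<not> L \<and> \<not> R \<and> \<not> U \<and> \<not> D) then sig (a * z)
      else if (\<not> L \<and> \<not> R \<and> U \<and> D) \<or> (L \<and> R \<and> \<not> U \<and> \<not> D) then sig (a * inverse z)
      else 0)"

(* States on the n x n grid, vertices (i,j), 0 <= i,j < n, row i from the top,
   column j from the left.
   h i j (i < n, j <= n): horizontal edge left of vertex (i,j); True = points right.
   v i j (i <= n, j < n): vertical edge above vertex (i,j); True = points up.
   Domain-wall boundary: horizontal boundary edges point in, vertical ones point out.
   Values outside the edge index range are fixed to False (normalisation). *)
definition dwbc_states :: "nat \<Rightarrow> ((nat \<Rightarrow> nat \<Rightarrow> bool) \<times> (nat \<Rightarrow> nat \<Rightarrow> bool)) set" where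
  "dwbc_states n = {(h, v).
      (\<forall>i<n. h i 0 \<and> \<not> h i n) \<and>
      (\<forall>j<n. v 0 j \<and> \<not> v n j) \<and>
      (\<forall>i j. \<not> (i < n \<and> j \<le> n) \<longrightarrow> \<not> h i j) \<and>
      (\<forall>i j. \<not> (i \<le> n \<and> j < n) \<longrightarrow> \<not> v i j) \<and>
      (\<forall>i<n. \<forall>j<n. ice (h i j) (h i (Suc j)) (v i j) (v (Suc i) j))}"

definition Zpf :: "nat \<Rightarrow> complex \<Rightarrow> (nat \<Rightarrow> complex) \<Rightarrow> (nat \<Rightarrow> complex) \<Rightarrow> complex" where
  "Zpf n a x y = (\<Sum>(h, v)\<in>dwbc_states n.
      \<Prod>i<n. \<Prod>j<n. vweight a (x i * inverse (y j)) (h i j) (h i (Suc j)) (v i j) (v (Suc i) j))"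

definition Ztilde :: "nat \<Rightarrow> complex \<Rightarrow> (nat \<Rightarrow> complex) \<Rightarrow> (nat \<Rightarrow> complex) \<Rightarrow> complex" where
  "Ztilde n a x y = (\<Prod>i<n. x i ^ (n - 1) * y i ^ (n - 1)) * Zpf n a x y"

definition Cn :: "nat \<Rightarrow> complex \<Rightarrow> complex" where
  "Cn n a = (\<Prod>i=1..n. sig (a ^ (2 * i)))"

end

theory Submission imports Defs "HOL-Library.FuncSet" begin

lemma ice_iff: "ice L R U D \<longleftrightarrow> (L = R \<and> U = D) \<or> (L \<noteq> R \<and> U = L \<and> D = R)"
  unfolding ice_def by (cases L; cases R; cases U; cases D) auto

definition kap :: "complex \<Rightarrow> bool \<Rightarrow> bool \<Rightarrow> bool \<Rightarrow> bool \<Rightarrow> nat \<Rightarrow> complex" where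
  "kap a L R U D e =
     (if (L \<and> \<not> R \<and> U \<and> \<not> D) \<or> (\<not> L \<and> R \<and> \<not> U \<and> D) then (if e = 1 then sig (a\<^sup>2) else 0)
      else if (L \<and> R \<and> U \<and> D) \<or> (\<not> L \<and> \<not> R \<and> \<not> U \<and> \<not> D) then (if e = 2 then a else if e = 0 then - inverse a else 0)
      else if (\<not> L \<and> \<not> R \<and> U \<and> D) \<or> (L \<and> R \<and> \<not> U \<and> \<not> D) then (if e = 2 then - inverse a else if e = 0 then a else 0)
      else 0)"

lemma sum3: "(\<Sum>e<3. f e) = f 0 + f 1 + (f (2::nat) :: complex)"
  by (simp add: eval_nat_numeral lessThan_Suc add.commute add.left_commute)

lemma vw_expand: "z \<noteq> 0 \<Longrightarrow> vweight a z L R U D = (\<Sum>e<3. kap a L R U D e * z^e) * inverse z"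
  unfolding vweight_def kap_def sum3 sig_def
  by (cases L; cases R; cases U; cases D) (auto simp: field_simps power2_eq_square)

lemma kap_nz: "ice L R U D \<Longrightarrow> kap a L R U D e \<noteq> 0 \<Longrightarrow> (L \<noteq> R \<longrightarrow> e = 1) \<and> (L = R \<longrightarrow> e \<noteq> 1)"
  unfolding ice_iff kap_def by (cases L; cases R; cases U; cases D) (auto split: if_splits)


lemma fin_funs:
  assumes "finite K"
  shows "finite {h :: nat \<Rightarrow> nat \<Rightarrow> bool. \<forall>i j. (i,j) \<notin> K \<longrightarrow> \<not> h i j}"
proof -
  have "{h :: nat \<Rightarrow> nat \<Rightarrow> bool. \<forall>i j. (i,j) \<notin> K \<longrightarrow> \<not> h i j} \<subseteq> (\<lambda>A i j. (i,j) \<in> A) ` Pow K"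
  proof
    fix h :: "nat \<Rightarrow> nat \<Rightarrow> bool" assume "h \<in> {h. \<forall>i j. (i,j) \<notin> K \<longrightarrow> \<not> h i j}"
    then have "{(i,j). h i j} \<in> Pow K" and "h = (\<lambda>i j. (i,j) \<in> {(i,j). h i j})" by auto
    then show "h \<in> (\<lambda>A i j. (i,j) \<in> A) ` Pow K" by blast
  qed
  then show ?thesis using assms by (meson finite_Pow_iff finite_imageI finite_subset)
qed

lemma fin_pairs:
  "finite {(h :: nat \<Rightarrow> nat \<Rightarrow> bool, v :: nat \<Rightarrow> nat \<Rightarrow> bool).
      (\<forall>i j. \<not> (i < N \<and> j \<le> M) \<longrightarrow> \<not> h i j) \<and> (\<forall>i j. \<not> (i \<le> N' \<and> j < M') \<longrightarrow> \<not> v i j)}"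
proof -
  let ?K1 = "{..<N} \<times> {..M}" and ?K2 = "{..N'} \<times> {..<M'}"
  have "{(h :: nat \<Rightarrow> nat \<Rightarrow> bool, v :: nat \<Rightarrow> nat \<Rightarrow> bool).
      (\<forall>i j. \<not> (i < N \<and> j \<le> M) \<longrightarrow> \<not> h i j) \<and> (\<forall>i j. \<not> (i \<le> N' \<and> j < M') \<longrightarrow> \<not> v i j)}
    \<subseteq> {h. \<forall>i j. (i,j) \<notin> ?K1 \<longrightarrow> \<not> h i j} \<times> {h. \<forall>i j. (i,j) \<notin> ?K2 \<longrightarrow> \<not> h i j}"
    by auto
  moreover have "finite ({h. \<forall>i j. (i,j) \<notin> ?K1 \<longrightarrow> \<not> h i j} \<times> {h. \<forall>i j. (i,j) \<notin> ?K2 \<longrightarrow> \<not> h i j})"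
    by (intro finite_cartesian_product fin_funs) auto
  ultimately show ?thesis by (rule finite_subset)
qed

lemma fin_dwbc: "finite (dwbc_states n)"
  by (rule finite_subset[OF _ fin_pairs[of n n n n]]) (auto simp: dwbc_states_def)

lemma exists_change: "f 0 \<noteq> f n \<Longrightarrow> \<exists>j<n. f j \<noteq> f (Suc j)"
proof (induction n)
  case 0 then show ?case by simp
next
  case (Suc n)
  show ?case
  proof (cases "f 0 = f n")
    case True
    then have "f n \<noteq> f (Suc n)" using Suc.prems by simp
    then show ?thesis by blast
  next
    case False
    then obtain j where "j < n" "f j \<noteq> f (Suc j)" using Suc.IH by blast
    then show ?thesis using less_SucI by blast
  qed
qed

lemma step_fun:
  assumes "f 0" "\<not> f n" "p < n" "\<forall>j<n. (f j \<noteq> f (Suc j)) \<longleftrightarrow> j = p" "j \<le> n"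
  shows "f j = (j \<le> p)"
proof -
  have A: "\<forall>j. j \<le> p \<longrightarrow> f j"
  proof
    fix j show "j \<le> p \<longrightarrow> f j"
    proof (induction j)
      case 0 then show ?case using assms(1) by simp
    next
      case (Suc j)
      show ?case
      proof
        assume h: "Suc j \<le> p"
        then have "j < n" "j \<noteq> p" using assms(3) by auto
        then have "f j = f (Suc j)" using assms(4) by blast
        then show "f (Suc j)" using Suc h by simp
      qed
    qed
  qed
  have B: "\<forall>k. p < n - k \<longrightarrow> \<not> f (n - k)"
  proof
    fix k show "p < n - k \<longrightarrow> \<not> f (n - k)"
    proof (induction k)
      case 0 then show ?case using assms by simp
    next
      case (Suc k)
      show ?case
      proof
        assume h: "p < n - Suc k"
        then have "Suc (n - Suc k) = n - k" by simp
        moreover have "n - Suc k < n" "n - Suc k \<noteq> p" using h by auto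
        then have "f (n - Suc k) = f (Suc (n - Suc k))" using assms(4) by blast
        ultimately show "\<not> f (n - Suc k)" using Suc h by simp
      qed
    qed
  qed
  show ?thesis
  proof (cases "j \<le> p")
    case True then show ?thesis using A by simp
  next
    case False
    then have "p < n - (n - j)" using assms by simp
    then have "\<not> f (n - (n - j))" using B by blast
    then show ?thesis using False assms by simp
  qed
qed

lemma sum_le_eq:
  fixes f g :: "'a \<Rightarrow> nat"
  assumes "finite A" "\<forall>x\<in>A. f x \<le> g x" "sum g A \<le> sum f A" "x \<in> A"
  shows "f x = g x"
proof (rule ccontr)
  assume "f x \<noteq> g x"
  then have "f x < g x" using assms by force
  then have "sum f A < sum g A" using assms by (intro sum_strict_mono_ex1) auto
  then show False using assms by simp
qed


definition II :: "nat \<Rightarrow> (nat \<times> nat) set" where "II n = {..<n} \<times> {..<n}"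
definition EE :: "nat \<Rightarrow> (nat \<times> nat \<Rightarrow> nat) set" where "EE n = PiE (II n) (\<lambda>_. {..<3})"
definition kv :: "complex \<Rightarrow> (nat \<Rightarrow> nat \<Rightarrow> bool) \<Rightarrow> (nat \<Rightarrow> nat \<Rightarrow> bool) \<Rightarrow> nat \<Rightarrow> nat \<Rightarrow> nat \<Rightarrow> complex" where
  "kv a h v i j e = kap a (h i j) (h i (Suc j)) (v i j) (v (Suc i) j) e"
definition coef where "coef a n h v E = (\<Prod>k\<in>II n. kv a h v (fst k) (snd k) (E k))"
definition Rs :: "nat \<Rightarrow> (nat \<times> nat \<Rightarrow> nat) \<Rightarrow> nat \<Rightarrow> nat" where "Rs n E i = (\<Sum>j<n. E (i,j))"
definition Cs :: "nat \<Rightarrow> (nat \<times> nat \<Rightarrow> nat) \<Rightarrow> nat \<Rightarrow> nat" where "Cs n E j = (\<Sum>i<n. E (i,j))"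
definition expo :: "nat \<Rightarrow> (nat \<times> nat \<Rightarrow> nat) \<Rightarrow> (nat \<Rightarrow> nat) \<times> (nat \<Rightarrow> nat)" where
  "expo n E = ((\<lambda>i. if i < n then Rs n E i - 1 else 0), (\<lambda>j. if j < n then 2*n - 1 - Cs n E j else 0))"
definition cf where
  "cf a n m = (\<Sum>s\<in>dwbc_states n. \<Sum>E\<in>{E\<in>EE n. expo n E = m}. coef a n (fst s) (snd s) E)"

lemma fin_EE: "finite (EE n)"
  unfolding EE_def II_def by (intro finite_PiE) auto

lemma dwbc_ice: "(h,v) \<in> dwbc_states n \<Longrightarrow> i < n \<Longrightarrow> j < n \<Longrightarrow> ice (h i j) (h i (Suc j)) (v i j) (v (Suc i) j)"
  unfolding dwbc_states_def by blast

lemma coef_nz: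
  assumes "(h,v) \<in> dwbc_states n" "E \<in> EE n" "coef a n h v E \<noteq> 0" "i < n" "j < n"
  shows "E (i,j) \<le> (if h i j \<noteq> h i (Suc j) then 1 else 2)" "h i j \<noteq> h i (Suc j) \<Longrightarrow> E (i,j) = 1"
proof -
  have ij: "(i,j) \<in> II n" using assms by (simp add: II_def)
  have "kv a h v i j (E (i,j)) \<noteq> 0"
    using assms(3) ij unfolding coef_def by (auto simp: prod_zero_iff[OF finite_subset[of "II n" "{..<n}\<times>{..<n}"]] II_def)
  then have k: "kap a (h i j) (h i (Suc j)) (v i j) (v (Suc i) j) (E (i,j)) \<noteq> 0" by (simp add: kv_def)
  have e3: "E (i,j) < 3" using assms(2) ij by (auto simp: EE_def PiE_def Pi_def)
  from kap_nz[OF dwbc_ice[OF assms(1,4,5)] k] e3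
  show "E (i,j) \<le> (if h i j \<noteq> h i (Suc j) then 1 else 2)" "h i j \<noteq> h i (Suc j) \<Longrightarrow> E (i,j) = 1"
    by auto
qed

lemma row_cv: "(h,v) \<in> dwbc_states n \<Longrightarrow> i < n \<Longrightarrow> \<exists>j<n. h i j \<noteq> h i (Suc j)"
  by (rule exists_change) (auto simp: dwbc_states_def)

lemma col_cv:
  assumes "(h,v) \<in> dwbc_states n" "j < n" shows "\<exists>i<n. h i j \<noteq> h i (Suc j)"
proof -
  have "v 0 j \<noteq> v n j" using assms by (auto simp: dwbc_states_def)
  then obtain i where i: "i < n" "v i j \<noteq> v (Suc i) j" using exists_change[of "\<lambda>i. v i j"] by blast
  then show ?thesis using dwbc_ice[OF assms(1) i(1) assms(2)] by (auto simp: ice_iff)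
qed

lemma sum_bound12: "finite A \<Longrightarrow> (\<Sum>x\<in>A. (if P x then 1 else 2::nat)) + (\<Sum>x\<in>A. of_bool (P x)) = 2 * card A"
proof -
  have "(\<Sum>x\<in>A. (if P x then 1 else 2::nat)) + (\<Sum>x\<in>A. of_bool (P x)) = (\<Sum>x\<in>A. (if P x then 1 else 2) + of_bool (P x))"
    by (simp only: sum.distrib)
  also have "\<dots> = (\<Sum>x\<in>A. 2)" by (rule sum.cong) auto
  finally show ?thesis by simp
qed

lemma sum_ofbool_ge1: "finite A \<Longrightarrow> x \<in> A \<Longrightarrow> P x \<Longrightarrow> 1 \<le> (\<Sum>x\<in>A. of_bool (P x) :: nat)"
  using member_le_sum[of x A "\<lambda>x. of_bool (P x) :: nat"] by simp

lemma Rs_bounds: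
  assumes "(h,v) \<in> dwbc_states n" "E \<in> EE n" "coef a n h v E \<noteq> 0" "i < n"
  shows "1 \<le> Rs n E i" "Rs n E i \<le> (\<Sum>j<n. if h i j \<noteq> h i (Suc j) then 1 else 2)"
        "Rs n E i + 1 \<le> 2 * n"
proof -
  obtain j0 where j0: "j0 < n" "h i j0 \<noteq> h i (Suc j0)" using row_cv[OF assms(1,4)] by blast
  have "E (i,j0) = 1" using coef_nz(2)[OF assms(1-4) j0(1) j0(2)] .
  then show "1 \<le> Rs n E i" unfolding Rs_def using member_le_sum[of j0 "{..<n}" "\<lambda>j. E (i,j)"] j0 by simp
  show le: "Rs n E i \<le> (\<Sum>j<n. if h i j \<noteq> h i (Suc j) then 1 else 2)"
    unfolding Rs_def by (rule sum_mono) (use coef_nz(1)[OF assms(1-4)] in auto)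
  have "1 \<le> (\<Sum>j<n. of_bool (h i j \<noteq> h i (Suc j)) :: nat)" using sum_ofbool_ge1[of "{..<n}" j0] j0 by simp
  then show "Rs n E i + 1 \<le> 2 * n" using le sum_bound12[of "{..<n}" "\<lambda>j. h i j \<noteq> h i (Suc j)"] by simp
qed

lemma Cs_bounds:
  assumes "(h,v) \<in> dwbc_states n" "E \<in> EE n" "coef a n h v E \<noteq> 0" "j < n"
  shows "Cs n E j \<le> (\<Sum>i<n. if h i j \<noteq> h i (Suc j) then 1 else 2)"
        "Cs n E j + 1 \<le> 2 * n"
proof -
  obtain i0 where i0: "i0 < n" "h i0 j \<noteq> h i0 (Suc j)" using col_cv[OF assms(1,4)] by blast
  show le: "Cs n E j \<le> (\<Sum>i<n. if h i j \<noteq> h i (Suc j) then 1 else 2)"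
    unfolding Cs_def by (rule sum_mono) (use coef_nz(1)[OF assms(1-3) _ assms(4)] in auto)
  have "1 \<le> (\<Sum>i<n. of_bool (h i j \<noteq> h i (Suc j)) :: nat)" using sum_ofbool_ge1[of "{..<n}" i0] i0 by simp
  then show "Cs n E j + 1 \<le> 2 * n" using le sum_bound12[of "{..<n}" "\<lambda>i. h i j \<noteq> h i (Suc j)"] by simp
qed


lemma prod_II: "(\<Prod>k\<in>II n. g k) = (\<Prod>i<n. \<Prod>j<n. g (i,j))"
  by (simp add: II_def prod.cartesian_product)

lemma P1:
  fixes x y :: "nat \<Rightarrow> complex"
  shows "(\<Prod>k\<in>II n. (x (fst k) * inverse (y (snd k))) ^ E k)
       = (\<Prod>i<n. x i ^ Rs n E i) * (\<Prod>j<n. inverse (y j) ^ Cs n E j)"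
proof -
  have "(\<Prod>k\<in>II n. (x (fst k) * inverse (y (snd k))) ^ E k)
      = (\<Prod>i<n. \<Prod>j<n. x i ^ E (i,j)) * (\<Prod>i<n. \<Prod>j<n. inverse (y j) ^ E (i,j))"
    unfolding prod_II power_mult_distrib prod.distrib fst_conv snd_conv ..
  also have "(\<Prod>i<n. \<Prod>j<n. inverse (y j) ^ E (i,j)) = (\<Prod>j<n. \<Prod>i<n. inverse (y j) ^ E (i,j))"
    by (rule prod.swap)
  also have "(\<Prod>i<n. \<Prod>j<n. x i ^ E (i,j)) * (\<Prod>j<n. \<Prod>i<n. inverse (y j) ^ E (i,j))
      = (\<Prod>i<n. x i ^ Rs n E i) * (\<Prod>j<n. inverse (y j) ^ Cs n E j)"
    unfolding Rs_def Cs_def power_sum ..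
  finally show ?thesis .
qed

definition mnm :: "nat \<Rightarrow> (nat \<Rightarrow> complex) \<Rightarrow> (nat \<Rightarrow> complex) \<Rightarrow> (nat \<Rightarrow> nat) \<times> (nat \<Rightarrow> nat) \<Rightarrow> complex" where
  "mnm n x y m = (\<Prod>i<n. x i ^ fst m i * y i ^ snd m i)"

lemma factor_id:
  fixes xi yi :: complex
  assumes "xi \<noteq> 0" "yi \<noteq> 0" "1 \<le> R" "C + 1 \<le> 2 * n" "1 \<le> n"
  shows "(xi ^ (n - 1) * yi ^ (n - 1)) * ((xi ^ R * inverse yi ^ C) * inverse (xi ^ n * inverse yi ^ n))
         = xi ^ (R - 1) * yi ^ (2 * n - 1 - C)"
proof -
  obtain R' where R: "R = Suc R'" using assms(3) by (cases R) auto
  obtain n' where N: "n = Suc n'" using assms(5) by (cases n) auto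
  define D where "D = n' + Suc n' - C"
  have D: "n' + Suc n' = C + D" using assms(4) N unfolding D_def by simp
  have D2: "2 * n - 1 - C = D" using D N by simp
  have xp: "xi ^ n' * xi ^ Suc R' * inverse (xi ^ Suc n') = xi ^ R'"
  proof -
    have "xi ^ n' \<noteq> 0" using assms(1) by simp
    then show ?thesis using assms(1) by (simp add: field_simps)
  qed
  have yp: "yi ^ n' * inverse yi ^ C * inverse (inverse yi ^ Suc n') = yi ^ D"
  proof -
    have "yi ^ n' * inverse yi ^ C * inverse (inverse yi ^ Suc n') = yi ^ (n' + Suc n') * inverse (yi ^ C)"
      by (simp only: power_inverse inverse_inverse_eq power_add mult_ac)
    also have "\<dots> = yi ^ D" unfolding D power_add using assms(2) by simp
    finally show ?thesis .
  qed
  have "(xi ^ n' * yi ^ n') * ((xi ^ Suc R' * inverse yi ^ C) * inverse (xi ^ Suc n' * inverse yi ^ Suc n'))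
      = (xi ^ n' * xi ^ Suc R' * inverse (xi ^ Suc n')) * (yi ^ n' * inverse yi ^ C * inverse (inverse yi ^ Suc n'))"
    by (simp only: inverse_mult_distrib mult_ac)
  also have "\<dots> = xi ^ R' * yi ^ D" unfolding xp yp ..
  finally show ?thesis using R N D2 by simp
qed

lemma prod_combine:
  fixes m a b c d :: "nat \<Rightarrow> complex"
  shows "(\<Prod>i\<in>A. m i * ((a i * b i) * inverse (c i * d i)))
       = (\<Prod>i\<in>A. m i) * (((\<Prod>i\<in>A. a i) * (\<Prod>i\<in>A. b i)) * inverse ((\<Prod>i\<in>A. c i) * (\<Prod>i\<in>A. d i)))"
proof -
  have e1: "(\<Prod>i\<in>A. inverse (c i * d i)) = inverse ((\<Prod>i\<in>A. c i) * (\<Prod>i\<in>A. d i))"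
    using prod_inversef[of "\<lambda>i. c i * d i" A] by (simp add: comp_def prod.distrib)
  show ?thesis by (simp only: prod.distrib e1)
qed

lemma mono_id:
  fixes x y :: "nat \<Rightarrow> complex"
  assumes nz: "\<forall>i<n. x i \<noteq> 0 \<and> y i \<noteq> 0" and R: "\<forall>i<n. 1 \<le> Rs n E i" and C: "\<forall>j<n. Cs n E j + 1 \<le> 2 * n"
  shows "(\<Prod>i<n. x i ^ (n - 1) * y i ^ (n - 1)) *
          ((\<Prod>k\<in>II n. (x (fst k) * inverse (y (snd k))) ^ E k) * inverse (\<Prod>k\<in>II n. x (fst k) * inverse (y (snd k))))
        = mnm n x y (expo n E)"
proof -
  have one: "(\<Prod>k\<in>II n. x (fst k) * inverse (y (snd k))) = (\<Prod>i<n. x i ^ n) * (\<Prod>j<n. inverse (y j) ^ n)"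
    using P1[where E="\<lambda>_. 1" and n=n and x=x and y=y] by (simp add: Rs_def Cs_def)
  have "(\<Prod>i<n. x i ^ (n - 1) * y i ^ (n - 1)) *
          ((\<Prod>k\<in>II n. (x (fst k) * inverse (y (snd k))) ^ E k) * inverse (\<Prod>k\<in>II n. x (fst k) * inverse (y (snd k))))
      = (\<Prod>i<n. (x i ^ (n - 1) * y i ^ (n - 1)) * ((x i ^ Rs n E i * inverse (y i) ^ Cs n E i) * inverse (x i ^ n * inverse (y i) ^ n)))"
    unfolding P1 one by (rule prod_combine[symmetric])
  also have "\<dots> = (\<Prod>i<n. x i ^ (Rs n E i - 1) * y i ^ (2 * n - 1 - Cs n E i))"
  proof (rule prod.cong[OF refl])
    fix i assume "i \<in> {..<n}"
    then show "(x i ^ (n - 1) * y i ^ (n - 1)) * ((x i ^ Rs n E i * inverse (y i) ^ Cs n E i) * inverse (x i ^ n * inverse (y i) ^ n))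
        = x i ^ (Rs n E i - 1) * y i ^ (2 * n - 1 - Cs n E i)"
      by (intro factor_id) (use nz R C in auto)
  qed
  also have "\<dots> = mnm n x y (expo n E)" by (simp add: mnm_def expo_def)
  finally show ?thesis .
qed

lemma state_rep:
  fixes x y :: "nat \<Rightarrow> complex"
  assumes s: "(h,v) \<in> dwbc_states n" and nz: "\<forall>i<n. x i \<noteq> 0 \<and> y i \<noteq> 0"
  shows "(\<Prod>i<n. x i ^ (n - 1) * y i ^ (n - 1)) *
           (\<Prod>i<n. \<Prod>j<n. vweight a (x i * inverse (y j)) (h i j) (h i (Suc j)) (v i j) (v (Suc i) j))
       = (\<Sum>E\<in>EE n. coef a n h v E * mnm n x y (expo n E))"
proof -
  define z where "z k = x (fst k) * inverse (y (snd k))" for k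
  have znz: "z k \<noteq> 0" if "k \<in> II n" for k using nz that by (auto simp: z_def II_def)
  have vw: "vweight a (x i * inverse (y j)) (h i j) (h i (Suc j)) (v i j) (v (Suc i) j)
      = (\<Sum>e<3. kv a h v i j e * z (i,j) ^ e) * inverse (z (i,j))" if "i < n" "j < n" for i j
  proof -
    have "x i * inverse (y j) \<noteq> 0" using nz that by auto
    from vw_expand[OF this] show ?thesis by (simp add: kv_def z_def)
  qed
  have "(\<Prod>i<n. \<Prod>j<n. vweight a (x i * inverse (y j)) (h i j) (h i (Suc j)) (v i j) (v (Suc i) j))
      = (\<Prod>k\<in>II n. (\<Sum>e<3. kv a h v (fst k) (snd k) e * z k ^ e) * inverse (z k))"
    unfolding prod_II by (intro prod.cong refl) (simp add: vw)
  also have "\<dots> = (\<Prod>k\<in>II n. \<Sum>e<3. kv a h v (fst k) (snd k) e * z k ^ e) * inverse (\<Prod>k\<in>II n. z k)"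
    unfolding prod.distrib prod_inversef[symmetric] comp_def ..
  also have "\<dots> = (\<Sum>E\<in>EE n. \<Prod>k\<in>II n. kv a h v (fst k) (snd k) (E k) * z k ^ (E k)) * inverse (\<Prod>k\<in>II n. z k)"
    unfolding EE_def by (subst prod_sum_PiE) (auto simp: II_def)
  also have "\<dots> = (\<Sum>E\<in>EE n. coef a n h v E * ((\<Prod>k\<in>II n. z k ^ (E k)) * inverse (\<Prod>k\<in>II n. z k)))"
    by (simp add: sum_distrib_right coef_def prod.distrib mult.assoc)
  finally have eq: "(\<Prod>i<n. \<Prod>j<n. vweight a (x i * inverse (y j)) (h i j) (h i (Suc j)) (v i j) (v (Suc i) j))
      = (\<Sum>E\<in>EE n. coef a n h v E * ((\<Prod>k\<in>II n. z k ^ (E k)) * inverse (\<Prod>k\<in>II n. z k)))" .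
  show ?thesis
    unfolding eq sum_distrib_left
  proof (rule sum.cong[OF refl])
    fix E assume E: "E \<in> EE n"
    show "(\<Prod>i<n. x i ^ (n - 1) * y i ^ (n - 1)) * (coef a n h v E * ((\<Prod>k\<in>II n. z k ^ E k) * inverse (\<Prod>k\<in>II n. z k)))
        = coef a n h v E * mnm n x y (expo n E)"
    proof (cases "coef a n h v E = 0")
      case True then show ?thesis by (simp only: mult_zero_left mult_zero_right)
    next
      case False
      have "(\<Prod>i<n. x i ^ (n - 1) * y i ^ (n - 1)) * ((\<Prod>k\<in>II n. z k ^ E k) * inverse (\<Prod>k\<in>II n. z k))
          = mnm n x y (expo n E)"
        unfolding z_def
        by (rule mono_id[OF nz]) (use Rs_bounds[OF s E False] Cs_bounds[OF s E False] in auto)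
      then show ?thesis unfolding mult.left_commute[of "\<Prod>i<n. x i ^ (n - 1) * y i ^ (n - 1)" "coef a n h v E"] by simp
    qed
  qed
qed


lemma regroup:
  fixes f :: "'s \<Rightarrow> 'e \<Rightarrow> complex" and g :: "'m \<Rightarrow> complex"
  assumes "finite D" "finite X"
  shows "(\<Sum>s\<in>D. \<Sum>E\<in>X. f s E * g (ex E)) = (\<Sum>m\<in>ex ` X. (\<Sum>s\<in>D. \<Sum>E\<in>{E\<in>X. ex E = m}. f s E) * g m)"
proof -
  have "(\<Sum>s\<in>D. \<Sum>E\<in>X. f s E * g (ex E)) = (\<Sum>s\<in>D. \<Sum>m\<in>ex ` X. \<Sum>E\<in>{E\<in>X. ex E = m}. f s E * g (ex E))"
    by (intro sum.cong refl sum.image_gen assms)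
  also have "\<dots> = (\<Sum>s\<in>D. \<Sum>m\<in>ex ` X. (\<Sum>E\<in>{E\<in>X. ex E = m}. f s E) * g m)"
    by (intro sum.cong refl) (simp add: sum_distrib_right)
  also have "\<dots> = (\<Sum>m\<in>ex ` X. \<Sum>s\<in>D. (\<Sum>E\<in>{E\<in>X. ex E = m}. f s E) * g m)"
    by (rule sum.swap)
  also have "\<dots> = (\<Sum>m\<in>ex ` X. (\<Sum>s\<in>D. \<Sum>E\<in>{E\<in>X. ex E = m}. f s E) * g m)"
    by (simp add: sum_distrib_right)
  finally show ?thesis .
qed

lemma cf_support:
  assumes "cf a n m \<noteq> 0"
  shows "\<exists>h v E. (h,v) \<in> dwbc_states n \<and> E \<in> EE n \<and> expo n E = m \<and> coef a n h v E \<noteq> 0"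
proof (rule ccontr)
  assume na: "\<not> ?thesis"
  have "\<forall>s\<in>dwbc_states n. \<forall>E\<in>{E\<in>EE n. expo n E = m}. coef a n (fst s) (snd s) E = 0"
  proof (intro ballI)
    fix s E assume s: "s \<in> dwbc_states n" and E: "E \<in> {E\<in>EE n. expo n E = m}"
    obtain h v where hv: "s = (h,v)" by (cases s) auto
    show "coef a n (fst s) (snd s) E = 0" using na s E unfolding hv by auto
  qed
  then have "cf a n m = 0" unfolding cf_def by simp
  then show False using assms by simp
qed

lemma cf_supp_sub: "{m. cf a n m \<noteq> 0} \<subseteq> expo n ` EE n"
  using cf_support by blast

lemma fin_supp: "finite {m. cf a n m \<noteq> 0}"
  by (rule finite_subset[OF cf_supp_sub finite_imageI[OF fin_EE]])

lemma rep:
  fixes x y :: "nat \<Rightarrow> complex"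
  assumes nz: "\<forall>i<n. x i \<noteq> 0 \<and> y i \<noteq> 0"
  shows "Ztilde n a x y = (\<Sum>m\<in>{m. cf a n m \<noteq> 0}. cf a n m * mnm n x y m)"
proof -
  have "Ztilde n a x y = (\<Sum>s\<in>dwbc_states n. (\<Prod>i<n. x i ^ (n - 1) * y i ^ (n - 1)) *
           (\<Prod>i<n. \<Prod>j<n. vweight a (x i * inverse (y j)) (fst s i j) (fst s i (Suc j)) (snd s i j) (snd s (Suc i) j)))"
    unfolding Ztilde_def Zpf_def sum_distrib_left by (simp add: split_beta)
  also have "\<dots> = (\<Sum>s\<in>dwbc_states n. \<Sum>E\<in>EE n. coef a n (fst s) (snd s) E * mnm n x y (expo n E))"
    by (intro sum.cong refl state_rep nz) simp
  also have "\<dots> = (\<Sum>m\<in>expo n ` EE n. cf a n m * mnm n x y m)"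
    unfolding cf_def by (rule regroup[OF fin_dwbc fin_EE])
  also have "\<dots> = (\<Sum>m\<in>{m. cf a n m \<noteq> 0}. cf a n m * mnm n x y m)"
    by (rule sum.mono_neutral_right[OF finite_imageI[OF fin_EE] cf_supp_sub]) auto
  finally show ?thesis .
qed

definition topm :: "nat \<Rightarrow> (nat \<Rightarrow> nat) \<times> (nat \<Rightarrow> nat)" where
  "topm n = (\<lambda>i. if i < n then 2 * (n - 1) else 0, \<lambda>_. 0)"

lemma degree:
  assumes "cf a n m \<noteq> 0" "m \<noteq> topm n"
  shows "(\<Sum>i<n. fst m i) < 2 * n * (n - 1)"
proof -
  obtain h v E where s: "(h,v) \<in> dwbc_states n" and E: "E \<in> EE n" and m: "expo n E = m" and c: "coef a n h v E \<noteq> 0"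
    using cf_support[OF assms(1)] by blast
  have Rb: "Rs n E i + 1 \<le> 2 * n" if "i < n" for i using Rs_bounds(3)[OF s E c that] .
  have Cb: "Cs n E j + 1 \<le> 2 * n" if "j < n" for j using Cs_bounds(2)[OF s E c that] .
  have fm: "fst m i = Rs n E i - 1" if "i < n" for i using that m by (auto simp: expo_def)
  have le: "(\<Sum>i<n. fst m i) \<le> (\<Sum>i<n. 2 * (n - 1))"
    by (rule sum_mono) (use fm Rb in fastforce)
  show ?thesis
  proof (rule ccontr)
    assume "\<not> ?thesis"
    then have ge: "(\<Sum>i<n. 2 * (n - 1)) \<le> (\<Sum>i<n. fst m i)" by simp
    have eqi: "fst m i = 2 * (n - 1)" if "i < n" for i
      using sum_le_eq[of "{..<n}" "fst m" "\<lambda>_. 2 * (n - 1)" i] fm Rb ge that by fastforce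
    then have R: "Rs n E i = 2 * n - 1" if "i < n" for i using fm[OF that] eqi[OF that] Rb[OF that] Rs_bounds(1)[OF s E c that] by simp
    have "(\<Sum>j<n. Cs n E j) = (\<Sum>i<n. Rs n E i)" unfolding Cs_def Rs_def by (rule sum.swap)
    also have "\<dots> = (\<Sum>i<n. 2 * n - 1)" using R by simp
    finally have ge2: "(\<Sum>j<n. 2 * n - 1) \<le> (\<Sum>j<n. Cs n E j)" by simp
    have C: "Cs n E j = 2 * n - 1" if "j < n" for j
      using sum_le_eq[of "{..<n}" "Cs n E" "\<lambda>_. 2 * n - 1" j] Cb ge2 that by fastforce
    have "m = topm n"
    proof -
      have "fst m = fst (topm n)" using eqi m by (auto simp: topm_def expo_def)
      moreover have "snd m = snd (topm n)" using C m by (auto simp: topm_def expo_def)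
      ultimately show ?thesis by (simp add: prod_eq_iff)
    qed
    then show False using assms(2) by simp
  qed
qed

definition Lw :: "complex \<Rightarrow> bool \<Rightarrow> bool \<Rightarrow> bool \<Rightarrow> bool \<Rightarrow> complex" where
  "Lw a L R U D = kap a L R U D (if L \<noteq> R then 1 else 2)"
definition Wt :: "complex \<Rightarrow> nat \<Rightarrow> nat \<Rightarrow> (nat \<Rightarrow> nat \<Rightarrow> bool) \<Rightarrow> (nat \<Rightarrow> nat \<Rightarrow> bool) \<Rightarrow> complex" where
  "Wt a n r h v = (\<Prod>i<r. \<Prod>j<n. Lw a (h i j) (h i (Suc j)) (v i j) (v (Suc i) j))"
definition G :: "nat \<Rightarrow> nat \<Rightarrow> nat set \<Rightarrow> ((nat \<Rightarrow> nat \<Rightarrow> bool) \<times> (nat \<Rightarrow> nat \<Rightarrow> bool)) set" where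
  "G n r S = {(h, v).
      (\<forall>i j. \<not> (i < r \<and> j \<le> n) \<longrightarrow> \<not> h i j) \<and>
      (\<forall>i j. \<not> (i \<le> r \<and> j < n) \<longrightarrow> \<not> v i j) \<and>
      (\<forall>j<n. v 0 j = (j \<in> S)) \<and> (\<forall>j<n. \<not> v r j) \<and>
      (\<forall>i<r. \<exists>p<n. \<forall>j\<le>n. h i j = (j \<le> p)) \<and>
      (\<forall>i<r. \<forall>j<n. ice (h i j) (h i (Suc j)) (v i j) (v (Suc i) j))}"
definition bb :: "complex \<Rightarrow> complex" where "bb a = - inverse (a\<^sup>2)"
definition Acnt :: "nat set \<Rightarrow> nat \<Rightarrow> nat" where "Acnt S p = card {j. j < p \<and> j \<notin> S}"
definition Bcnt :: "nat set \<Rightarrow> nat \<Rightarrow> nat" where "Bcnt S p = card {j\<in>S. p < j}"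
definition XX :: "nat set \<Rightarrow> nat" where "XX S = (\<Sum>q\<in>S. Acnt S q)"
definition qf :: "complex \<Rightarrow> nat \<Rightarrow> complex" where "qf q r = (\<Prod>k<r. \<Sum>t<Suc k. q ^ t)"
definition Fcl :: "complex \<Rightarrow> nat \<Rightarrow> nat \<Rightarrow> nat set \<Rightarrow> complex" where
  "Fcl a n r S = sig (a\<^sup>2) ^ r * a ^ (r * (n - 1)) * bb a ^ XX S * qf ((bb a)\<^sup>2) r"

lemma sum_ofbool_card: "finite A \<Longrightarrow> (\<Sum>x\<in>A. of_bool (P x) :: nat) = card {x\<in>A. P x}"
  by (simp add: Int_def)

lemma Acnt_remove:
  assumes "p \<in> S" shows "Acnt (S - {p}) q = Acnt S q + of_bool (p < q)"
proof -
  have e: "{j. j < q \<and> j \<notin> S - {p}} = {j. j < q \<and> j \<notin> S} \<union> {j. j = p \<and> p < q}" using assms by auto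
  have "card ({j. j < q \<and> j \<notin> S} \<union> {j. j = p \<and> p < q}) = card {j. j < q \<and> j \<notin> S} + card {j. j = p \<and> p < q}"
    by (rule card_Un_disjoint) (use assms in auto)
  moreover have "card {j. j = p \<and> p < q} = of_bool (p < q)" by (cases "p < q") auto
  ultimately show ?thesis unfolding Acnt_def e by simp
qed

lemma XX_remove:
  assumes "finite S" "p \<in> S" shows "XX (S - {p}) + Acnt S p = XX S + Bcnt S p"
proof -
  have "XX S = Acnt S p + (\<Sum>q\<in>S - {p}. Acnt S q)" unfolding XX_def using assms by (simp add: sum.remove)
  moreover have "XX (S - {p}) = (\<Sum>q\<in>S - {p}. Acnt S q) + (\<Sum>q\<in>S - {p}. of_bool (p < q))"
    unfolding XX_def by (simp add: Acnt_remove[OF assms(2)] sum.distrib)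
  moreover have "(\<Sum>q\<in>S - {p}. of_bool (p < q) :: nat) = Bcnt S p"
    unfolding Bcnt_def using assms by (subst sum_ofbool_card) (auto intro!: arg_cong[where f=card])
  ultimately show ?thesis by simp
qed

lemma Bcnt_sum:
  assumes "finite S" shows "(\<Sum>p\<in>S. f (Bcnt S p)) = (\<Sum>k<card S. f k)"
proof -
  have lt: "Bcnt S p' < Bcnt S p" if "p \<in> S" "p' \<in> S" "p < p'" for p p'
    unfolding Bcnt_def by (rule psubset_card_mono) (use assms that in auto)
  have inj: "inj_on (Bcnt S) S"
  proof (rule inj_onI)
    fix p p' assume "p \<in> S" "p' \<in> S" "Bcnt S p = Bcnt S p'"
    then show "p = p'" using lt by (metis less_irrefl linorder_neqE_nat)
  qed
  have sub: "Bcnt S ` S \<subseteq> {..<card S}"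
  proof
    fix k assume "k \<in> Bcnt S ` S"
    then obtain p where p: "p \<in> S" "k = Bcnt S p" by blast
    have "card {j\<in>S. p < j} < card S" by (rule psubset_card_mono) (use assms p in auto)
    then show "k \<in> {..<card S}" using p by (simp add: Bcnt_def)
  qed
  have "card (Bcnt S ` S) = card {..<card S}" using card_image[OF inj] by simp
  then have im: "Bcnt S ` S = {..<card S}" using card_subset_eq[OF _ sub] by simp
  show ?thesis using sum.reindex[OF inj, of f] unfolding im by simp
qed


definition consH :: "nat \<Rightarrow> (nat \<Rightarrow> nat \<Rightarrow> bool) \<Rightarrow> nat \<Rightarrow> nat \<Rightarrow> bool" where
  "consH p h' = (\<lambda>i j. if i = 0 then j \<le> p else h' (i - 1) j)"
definition consV :: "nat set \<Rightarrow> (nat \<Rightarrow> nat \<Rightarrow> bool) \<Rightarrow> nat \<Rightarrow> nat \<Rightarrow> bool" where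
  "consV S v' = (\<lambda>i j. if i = 0 then j \<in> S else v' (i - 1) j)"

lemma G_cons:
  assumes S: "S \<subseteq> {..<n}" and p: "p \<in> S" and t: "(h', v') \<in> G n r (S - {p})"
  shows "(consH p h', consV S v') \<in> G n (Suc r) S"
proof -
  have pn: "p < n" using S p by auto
  have v0: "v' 0 j = (j \<in> S \<and> j \<noteq> p)" if "j < n" for j using t that by (auto simp: G_def)
  have ice0: "ice (consH p h' 0 j) (consH p h' 0 (Suc j)) (consV S v' 0 j) (consV S v' (Suc 0) j)" if "j < n" for j
    using v0[OF that] p unfolding consH_def consV_def ice_iff
    by (cases "j < p"; cases "j = p") auto
  have iceS: "ice (consH p h' (Suc i) j) (consH p h' (Suc i) (Suc j)) (consV S v' (Suc i) j) (consV S v' (Suc (Suc i)) j)"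
    if "i < r" "j < n" for i j
    using t that unfolding G_def consH_def consV_def by auto
  have ice_all: "\<forall>i<Suc r. \<forall>j<n. ice (consH p h' i j) (consH p h' i (Suc j)) (consV S v' i j) (consV S v' (Suc i) j)"
  proof (intro allI impI)
    fix i j assume "i < Suc r" "j < n"
    then show "ice (consH p h' i j) (consH p h' i (Suc j)) (consV S v' i j) (consV S v' (Suc i) j)"
      using ice0 iceS by (cases i) auto
  qed
  have rows: "\<forall>i<Suc r. \<exists>q<n. \<forall>j\<le>n. consH p h' i j = (j \<le> q)"
  proof (intro allI impI)
    fix i assume "i < Suc r"
    then show "\<exists>q<n. \<forall>j\<le>n. consH p h' i j = (j \<le> q)"
      using t pn by (cases i) (auto simp: G_def consH_def)
  qed
  have nh: "\<forall>i j. \<not> (i < Suc r \<and> j \<le> n) \<longrightarrow> \<not> consH p h' i j"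
    using t pn by (auto simp: G_def consH_def)
  have nv: "\<forall>i j. \<not> (i \<le> Suc r \<and> j < n) \<longrightarrow> \<not> consV S v' i j"
    using t S by (auto simp: G_def consV_def)
  have top: "\<forall>j<n. consV S v' 0 j = (j \<in> S)" by (simp add: consV_def)
  have bot: "\<forall>j<n. \<not> consV S v' (Suc r) j" using t by (simp add: G_def consV_def)
  show ?thesis unfolding G_def using nh nv top bot rows ice_all by simp
qed

lemma G_decomp:
  assumes S: "S \<subseteq> {..<n}" and s: "(h, v) \<in> G n (Suc r) S"
  obtains p where "p \<in> S" "(\<lambda>i. h (Suc i), \<lambda>i. v (Suc i)) \<in> G n r (S - {p})"
    "h = consH p (\<lambda>i. h (Suc i))" "v = consV S (\<lambda>i. v (Suc i))"
proof -
  obtain p where pn: "p < n" and hp: "\<forall>j\<le>n. h 0 j = (j \<le> p)" using s by (auto simp: G_def)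
  have ice: "ice (h i j) (h i (Suc j)) (v i j) (v (Suc i) j)" if "i < Suc r" "j < n" for i j
    using s that by (auto simp: G_def)
  have vt: "v 0 j = (j \<in> S)" if "j < n" for j using s that by (auto simp: G_def)
  have pS: "p \<in> S" and v1p: "\<not> v (Suc 0) p"
    using ice[of 0 p] hp pn vt[OF pn] by (auto simp: ice_iff)
  have v1: "v (Suc 0) j = (j \<in> S - {p})" if "j < n" for j
  proof (cases "j = p")
    case True then show ?thesis using v1p by simp
  next
    case False
    have "h 0 j = h 0 (Suc j)" using hp that False by auto
    then show ?thesis using ice[of 0 j] that vt[OF that] False by (auto simp: ice_iff)
  qed
  have tail: "(\<lambda>i. h (Suc i), \<lambda>i. v (Suc i)) \<in> G n r (S - {p})"
    using s v1 unfolding G_def by auto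
  have hh: "h = consH p (\<lambda>i. h (Suc i))"
  proof (intro ext)
    fix i j show "h i j = consH p (\<lambda>i. h (Suc i)) i j"
    proof (cases i)
      case 0
      then show ?thesis using hp s pn by (cases "j \<le> n") (auto simp: consH_def G_def)
    qed (simp add: consH_def)
  qed
  have vv: "v = consV S (\<lambda>i. v (Suc i))"
  proof (intro ext)
    fix i j show "v i j = consV S (\<lambda>i. v (Suc i)) i j"
    proof (cases i)
      case 0
      then show ?thesis using vt s S by (cases "j < n") (auto simp: consV_def G_def)
    qed (simp add: consV_def)
  qed
  show ?thesis using that pS tail hh vv by blast
qed

lemma G_Suc:
  assumes S: "S \<subseteq> {..<n}"
  shows "G n (Suc r) S = (\<lambda>(p, t). (consH p (fst t), consV S (snd t))) ` (SIGMA p:S. G n r (S - {p}))"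
proof
  show "G n (Suc r) S \<subseteq> (\<lambda>(p, t). (consH p (fst t), consV S (snd t))) ` (SIGMA p:S. G n r (S - {p}))"
  proof
    fix s assume "s \<in> G n (Suc r) S"
    then obtain h v where s: "s = (h,v)" "(h,v) \<in> G n (Suc r) S" by (cases s) auto
    from G_decomp[OF S s(2)] obtain p where "p \<in> S" "(\<lambda>i. h (Suc i), \<lambda>i. v (Suc i)) \<in> G n r (S - {p})"
      "h = consH p (\<lambda>i. h (Suc i))" "v = consV S (\<lambda>i. v (Suc i))" by blast
    then show "s \<in> (\<lambda>(p, t). (consH p (fst t), consV S (snd t))) ` (SIGMA p:S. G n r (S - {p}))"
      using s(1) by (intro image_eqI[where x="(p, (\<lambda>i. h (Suc i), \<lambda>i. v (Suc i)))"]) auto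
  qed
next
  show "(\<lambda>(p, t). (consH p (fst t), consV S (snd t))) ` (SIGMA p:S. G n r (S - {p})) \<subseteq> G n (Suc r) S"
    using G_cons[OF S] by auto
qed

lemma cons_inj: "inj_on (\<lambda>(p, t). (consH p (fst t), consV S (snd t))) X"
proof (rule inj_onI)
  fix x y assume eq: "(case x of (p, t) \<Rightarrow> (consH p (fst t), consV S (snd t))) = (case y of (p, t) \<Rightarrow> (consH p (fst t), consV S (snd t)))"
  obtain p h v where x: "x = (p, (h, v))" by (cases x) auto
  obtain p' h' v' where y: "y = (p', (h', v'))" by (cases y) auto
  have e1: "consH p h = consH p' h'" and e2: "consV S v = consV S v'" using eq x y by auto
  have "(p \<le> p') = (p' \<le> p')" "(p' \<le> p) = (p \<le> p)" using fun_cong[OF fun_cong[OF e1, of 0]] by (auto simp: consH_def)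
  then have "p = p'" by simp
  moreover have "h = h'" using e1 by (intro ext) (metis (no_types) consH_def diff_Suc_1 nat.distinct(1))
  moreover have "v = v'" using e2 by (intro ext) (metis (no_types) consV_def diff_Suc_1 nat.distinct(1))
  ultimately show "x = y" using x y by simp
qed

lemma fin_G: "finite (G n r S)"
  by (rule finite_subset[OF _ fin_pairs[of r n r n]]) (auto simp: G_def)

lemma Lw_row:
  assumes "p \<in> S" "j < n"
  shows "Lw a (j \<le> p) (Suc j \<le> p) (j \<in> S) (j \<in> S \<and> j \<noteq> p)
       = (if j = p then sig (a\<^sup>2) else a) * (if (j < p \<and> j \<notin> S) \<or> (p < j \<and> j \<in> S) then bb a else 1)"
proof -
  have "a * bb a = - inverse a" unfolding bb_def
    by (cases "a = 0") (auto simp: field_simps power2_eq_square)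
  then show ?thesis unfolding Lw_def kap_def using assms
    by (cases "j < p"; cases "j = p"; cases "j \<in> S") auto
qed

lemma RW:
  assumes S: "S \<subseteq> {..<n}" and p: "p \<in> S"
  shows "(\<Prod>j<n. Lw a (j \<le> p) (Suc j \<le> p) (j \<in> S) (j \<in> S \<and> j \<noteq> p))
       = sig (a\<^sup>2) * a ^ (n - 1) * bb a ^ (Acnt S p + Bcnt S p)"
proof -
  have pn: "p < n" using S p by auto
  have "(\<Prod>j<n. Lw a (j \<le> p) (Suc j \<le> p) (j \<in> S) (j \<in> S \<and> j \<noteq> p))
      = (\<Prod>j<n. (if j = p then sig (a\<^sup>2) else a)) * (\<Prod>j<n. (if (j < p \<and> j \<notin> S) \<or> (p < j \<and> j \<in> S) then bb a else 1))"
    by (simp add: Lw_row[OF p] prod.distrib)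
  also have "(\<Prod>j<n. (if j = p then sig (a\<^sup>2) else a)) = sig (a\<^sup>2) * a ^ (n - 1)"
  proof -
    have "(\<Prod>j<n. (if j = p then sig (a\<^sup>2) else a)) = sig (a\<^sup>2) * (\<Prod>j\<in>{..<n} - {p}. (if j = p then sig (a\<^sup>2) else a))"
      using pn by (simp add: prod.remove)
    also have "(\<Prod>j\<in>{..<n} - {p}. (if j = p then sig (a\<^sup>2) else a)) = (\<Prod>j\<in>{..<n} - {p}. a)"
      by (rule prod.cong) auto
    finally show ?thesis using pn by simp
  qed
  also have "(\<Prod>j<n. (if (j < p \<and> j \<notin> S) \<or> (p < j \<and> j \<in> S) then bb a else 1)) = bb a ^ (Acnt S p + Bcnt S p)"
  proof -
    have "(\<Prod>j<n. (if (j < p \<and> j \<notin> S) \<or> (p < j \<and> j \<in> S) then bb a else 1))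
        = (\<Prod>j\<in>{j\<in>{..<n}. (j < p \<and> j \<notin> S) \<or> (p < j \<and> j \<in> S)}. bb a)"
      using prod.inter_filter[of "{..<n}" "\<lambda>_. bb a" "\<lambda>j. (j < p \<and> j \<notin> S) \<or> (p < j \<and> j \<in> S)"] by simp
    also have "{j\<in>{..<n}. (j < p \<and> j \<notin> S) \<or> (p < j \<and> j \<in> S)} = {j. j < p \<and> j \<notin> S} \<union> {j\<in>S. p < j}"
      using S pn by auto
    finally have e: "(\<Prod>j<n. (if (j < p \<and> j \<notin> S) \<or> (p < j \<and> j \<in> S) then bb a else 1))
       = (\<Prod>j\<in>{j. j < p \<and> j \<notin> S} \<union> {j\<in>S. p < j}. bb a)" .
    have "card ({j. j < p \<and> j \<notin> S} \<union> {j\<in>S. p < j}) = Acnt S p + Bcnt S p" unfolding Acnt_def Bcnt_def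
      by (rule card_Un_disjoint) (use S finite_subset[OF _ finite_lessThan[of n]] in auto)
    then show ?thesis unfolding e by simp
  qed
  finally show ?thesis .
qed


lemma Wt_cons:
  assumes S: "S \<subseteq> {..<n}" and p: "p \<in> S" and t: "(h', v') \<in> G n r (S - {p})"
  shows "Wt a n (Suc r) (consH p h') (consV S v') = sig (a\<^sup>2) * a ^ (n - 1) * bb a ^ (Acnt S p + Bcnt S p) * Wt a n r h' v'"
proof -
  have v0: "v' 0 j = (j \<in> S \<and> j \<noteq> p)" if "j < n" for j using t that by (auto simp: G_def)
  have "Wt a n (Suc r) (consH p h') (consV S v')
      = (\<Prod>j<n. Lw a (j \<le> p) (Suc j \<le> p) (j \<in> S) (j \<in> S \<and> j \<noteq> p)) * Wt a n r h' v'"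
    unfolding Wt_def prod.lessThan_Suc_shift
    by (intro arg_cong2[where f="(*)"] prod.cong refl) (auto simp: consH_def consV_def v0)
  then show ?thesis using RW[OF S p] by simp
qed

lemma G_zero: "G n 0 {} = {(\<lambda>_ _. False, \<lambda>_ _. False)}"
proof
  show "G n 0 {} \<subseteq> {(\<lambda>_ _. False, \<lambda>_ _. False)}"
  proof
    fix s assume s: "s \<in> G n 0 {}"
    obtain h v where hv: "s = (h, v)" by (cases s) auto
    have "h = (\<lambda>_ _. False)" using s hv by (auto simp: G_def)
    moreover have "v = (\<lambda>_ _. False)"
    proof (intro ext)
      fix i j show "v i j = False"
        using s hv by (cases "i = 0 \<and> j < n") (auto simp: G_def)
    qed
    ultimately show "s \<in> {(\<lambda>_ _. False, \<lambda>_ _. False)}" using hv by simp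
  qed
qed (auto simp: G_def)

lemma G_sum:
  assumes a: "a \<noteq> 0"
  shows "S \<subseteq> {..<n} \<Longrightarrow> card S = r \<Longrightarrow> (\<Sum>t\<in>G n r S. Wt a n r (fst t) (snd t)) = Fcl a n r S"
proof (induction r arbitrary: S)
  case 0
  then have "S = {}" using finite_subset[OF _ finite_lessThan[of n]] by auto
  then show ?case by (simp add: G_zero Wt_def Fcl_def XX_def qf_def)
next
  case (Suc r)
  have fS: "finite S" using Suc.prems finite_subset[OF _ finite_lessThan[of n]] by auto
  define q where "q = (bb a)\<^sup>2"
  have "(\<Sum>t\<in>G n (Suc r) S. Wt a n (Suc r) (fst t) (snd t))
      = (\<Sum>x\<in>(SIGMA p:S. G n r (S - {p})). Wt a n (Suc r) (consH (fst x) (fst (snd x))) (consV S (snd (snd x))))"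
    unfolding G_Suc[OF Suc.prems(1)] by (subst sum.reindex[OF cons_inj]) (simp add: split_beta)
  also have "\<dots> = (\<Sum>p\<in>S. \<Sum>t\<in>G n r (S - {p}). Wt a n (Suc r) (consH p (fst t)) (consV S (snd t)))"
    by (subst sum.Sigma[OF fS]) (auto simp: fin_G split_beta)
  also have "\<dots> = (\<Sum>p\<in>S. sig (a\<^sup>2) * a ^ (n - 1) * bb a ^ (Acnt S p + Bcnt S p) * (\<Sum>t\<in>G n r (S - {p}). Wt a n r (fst t) (snd t)))"
    unfolding sum_distrib_left
    by (intro sum.cong refl) (use Wt_cons[OF Suc.prems(1)] in \<open>auto simp: split_beta\<close>)
  also have "\<dots> = (\<Sum>p\<in>S. sig (a\<^sup>2) * a ^ (n - 1) * bb a ^ (Acnt S p + Bcnt S p) * Fcl a n r (S - {p}))"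
    by (intro sum.cong refl) (subst Suc.IH, use Suc.prems fS in auto)
  also have "\<dots> = (\<Sum>p\<in>S. (sig (a\<^sup>2) ^ Suc r * a ^ (Suc r * (n - 1)) * bb a ^ XX S * qf q r) * q ^ Bcnt S p)"
  proof (intro sum.cong refl)
    fix p assume p: "p \<in> S"
    have e: "Acnt S p + Bcnt S p + XX (S - {p}) = XX S + 2 * Bcnt S p" using XX_remove[OF fS p] by simp
    have "bb a ^ (Acnt S p + Bcnt S p) * bb a ^ XX (S - {p}) = bb a ^ XX S * q ^ Bcnt S p"
      unfolding power_add[symmetric] e q_def by (simp add: power_add power_mult)
    note bbf = this
    have ea: "a ^ (n - 1) * a ^ (r * (n - 1)) = a ^ (Suc r * (n - 1))" by (simp add: power_add[symmetric])
    have "sig (a\<^sup>2) * a ^ (n - 1) * bb a ^ (Acnt S p + Bcnt S p) * Fcl a n r (S - {p})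
        = (sig (a\<^sup>2) * sig (a\<^sup>2) ^ r) * (a ^ (n - 1) * a ^ (r * (n - 1))) * (bb a ^ (Acnt S p + Bcnt S p) * bb a ^ XX (S - {p})) * qf q r"
      unfolding Fcl_def q_def[symmetric] by (simp only: mult_ac)
    also have "\<dots> = (sig (a\<^sup>2) ^ Suc r * a ^ (Suc r * (n - 1)) * bb a ^ XX S * qf q r) * q ^ Bcnt S p"
      unfolding ea bbf power_Suc by (simp only: mult_ac)
    finally show "sig (a\<^sup>2) * a ^ (n - 1) * bb a ^ (Acnt S p + Bcnt S p) * Fcl a n r (S - {p})
        = (sig (a\<^sup>2) ^ Suc r * a ^ (Suc r * (n - 1)) * bb a ^ XX S * qf q r) * q ^ Bcnt S p" .
  qed
  also have "\<dots> = (sig (a\<^sup>2) ^ Suc r * a ^ (Suc r * (n - 1)) * bb a ^ XX S * qf q r) * (\<Sum>k<Suc r. q ^ k)"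
    unfolding sum_distrib_left[symmetric] Bcnt_sum[OF fS] Suc.prems(2) ..
  also have "\<dots> = Fcl a n (Suc r) S" unfolding Fcl_def q_def qf_def by simp
  finally show ?case .
qed

lemma geo:
  assumes a: "a \<noteq> 0"
  shows "sig (a\<^sup>2) * a ^ (2 * r) * (\<Sum>t<Suc r. ((bb a)\<^sup>2) ^ t) = sig (a ^ (2 * Suc r))"
proof (induction r)
  case 0 then show ?case by simp
next
  case (Suc r)
  define w where "w = a ^ (2 * Suc r)"
  define q where "q = (bb a)\<^sup>2"
  define Q where "Q = (\<Sum>t<Suc r. q ^ t)"
  have w0: "w \<noteq> 0" using a by (simp add: w_def)
  have qv: "q = inverse (a ^ 4)" by (simp add: q_def bb_def power2_eq_square field_simps eval_nat_numeral)
  have IH: "sig (a\<^sup>2) * a ^ (2 * r) * Q = sig w" using Suc.IH unfolding Q_def q_def w_def .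
  have sf: "(\<Sum>t<Suc (Suc r). q ^ t) = 1 + q * Q"
    unfolding Q_def sum.lessThan_Suc_shift[of _ "Suc r"] by (simp add: sum_distrib_left del: sum.lessThan_Suc)
  have ww: "a ^ (2 * Suc r) = a\<^sup>2 * a ^ (2 * r)" by (simp add: power_add[symmetric])
  have "sig (a\<^sup>2) * a ^ (2 * Suc r) * (\<Sum>t<Suc (Suc r). q ^ t)
      = sig (a\<^sup>2) * w + a\<^sup>2 * q * (sig (a\<^sup>2) * a ^ (2 * r) * Q)"
    unfolding sf w_def ww by (simp add: algebra_simps)
  also have "\<dots> = sig (a\<^sup>2) * w + a\<^sup>2 * inverse (a ^ 4) * sig w" unfolding IH qv ..
  also have "\<dots> = sig (a\<^sup>2 * w)" unfolding sig_def using a w0 by (simp add: field_simps eval_nat_numeral)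
  also have "a\<^sup>2 * w = a ^ (2 * Suc (Suc r))" by (simp add: w_def power_add[symmetric])
  finally show ?case unfolding q_def .
qed

lemma qf_Suc: "qf q (Suc r) = qf q r * (\<Sum>t<Suc r. q ^ t)"
  by (simp add: qf_def)

lemma Fcl_full:
  assumes a: "a \<noteq> 0"
  shows "Fcl a n n {..<n} = Cn n a"
proof -
  have X0: "XX {..<n} = 0" unfolding XX_def Acnt_def by (intro sum.neutral) auto
  have "sig (a\<^sup>2) ^ r * a ^ (r * (r - 1)) * qf ((bb a)\<^sup>2) r = (\<Prod>i=1..r. sig (a ^ (2 * i)))" for r
  proof (induction r)
    case 0 then show ?case by (simp add: qf_def)
  next
    case (Suc r)
    have e: "Suc r * (Suc r - 1) = r * (r - 1) + 2 * r" by (cases r) auto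
    have "sig (a\<^sup>2) ^ Suc r * a ^ (Suc r * (Suc r - 1)) * qf ((bb a)\<^sup>2) (Suc r)
        = (sig (a\<^sup>2) ^ r * a ^ (r * (r - 1)) * qf ((bb a)\<^sup>2) r) * (sig (a\<^sup>2) * a ^ (2 * r) * (\<Sum>t<Suc r. ((bb a)\<^sup>2) ^ t))"
      unfolding e qf_Suc power_add power_Suc by (simp only: mult_ac)
    also have "\<dots> = (\<Prod>i=1..r. sig (a ^ (2 * i))) * sig (a ^ (2 * Suc r))" unfolding Suc.IH geo[OF a] ..
    also have "\<dots> = (\<Prod>i=1..Suc r. sig (a ^ (2 * i)))" by (simp add: prod.nat_ivl_Suc' mult.commute)
    finally show ?case .
  qed
  then show ?thesis unfolding Fcl_def Cn_def X0 by simp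
qed


definition D1 :: "nat \<Rightarrow> ((nat \<Rightarrow> nat \<Rightarrow> bool) \<times> (nat \<Rightarrow> nat \<Rightarrow> bool)) set" where
  "D1 n = {s\<in>dwbc_states n. \<forall>i<n. \<exists>p<n. \<forall>j\<le>n. fst s i j = (j \<le> p)}"

definition Es :: "nat \<Rightarrow> (nat \<Rightarrow> nat \<Rightarrow> bool) \<Rightarrow> nat \<times> nat \<Rightarrow> nat" where
  "Es n h = restrict (\<lambda>k. if h (fst k) (snd k) \<noteq> h (fst k) (Suc (snd k)) then 1 else 2) (II n)"

lemma D1_G: "D1 n = G n n {..<n}"
proof
  show "D1 n \<subseteq> G n n {..<n}"
  proof
    fix s assume s: "s \<in> D1 n"
    obtain h v where hv: "s = (h, v)" by (cases s) auto
    show "s \<in> G n n {..<n}" using s unfolding hv D1_def dwbc_states_def G_def by auto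
  qed
next
  show "G n n {..<n} \<subseteq> D1 n"
  proof
    fix s assume s: "s \<in> G n n {..<n}"
    obtain h v where hv: "s = (h, v)" by (cases s) auto
    have rows: "\<forall>i<n. \<exists>p<n. \<forall>j\<le>n. h i j = (j \<le> p)" using s hv by (simp add: G_def)
    have h0: "\<forall>i<n. h i 0 \<and> \<not> h i n"
    proof (intro allI impI)
      fix i assume "i < n"
      then obtain p where "p < n" "\<forall>j\<le>n. h i j = (j \<le> p)" using rows by blast
      then show "h i 0 \<and> \<not> h i n" by auto
    qed
    show "s \<in> D1 n" using s h0 rows unfolding hv D1_def dwbc_states_def G_def by auto
  qed
qed

lemma Rs_Es: "i < n \<Longrightarrow> Rs n (Es n h) i = (\<Sum>j<n. if h i j \<noteq> h i (Suc j) then 1 else 2)"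
  unfolding Rs_def Es_def II_def by (intro sum.cong refl) auto

lemma Cs_Es: "j < n \<Longrightarrow> Cs n (Es n h) j = (\<Sum>i<n. if h i j \<noteq> h i (Suc j) then 1 else 2)"
  unfolding Cs_def Es_def II_def by (intro sum.cong refl) auto

lemma Es_EE: "Es n h \<in> EE n"
  unfolding Es_def EE_def by auto

lemma coef_Es: "coef a n h v (Es n h) = Wt a n n h v"
  unfolding coef_def Wt_def prod_II
  by (intro prod.cong refl) (auto simp: Es_def II_def kv_def Lw_def)

lemma unique_cv:
  assumes "finite A" "j0 \<in> A" "P j0" "(\<Sum>j\<in>A. of_bool (P j) :: nat) \<le> 1" "j \<in> A"
  shows "P j \<longleftrightarrow> j = j0"
proof -
  have e: "(\<Sum>j\<in>A. of_bool (P j) :: nat) = of_bool (P j0) + (\<Sum>j\<in>A - {j0}. of_bool (P j))"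
    by (rule sum.remove[OF assms(1,2)])
  have o: "(of_bool (P j0) :: nat) = 1" using assms(3) by simp
  have z: "(\<Sum>j\<in>A - {j0}. of_bool (P j) :: nat) = 0" using e o assms(4) by linarith
  have "\<forall>j\<in>A - {j0}. (of_bool (P j) :: nat) = 0"
    using sum_eq_0_iff[OF finite_Diff[OF assms(1)], of "\<lambda>j. of_bool (P j) :: nat" "{j0}"] z by blast
  then have "\<forall>j\<in>A - {j0}. \<not> P j" by simp
  then show ?thesis using assms by blast
qed

lemma fib_char:
  assumes s: "(h,v) \<in> dwbc_states n" and E: "E \<in> EE n" and ex: "expo n E = topm n" and c: "coef a n h v E \<noteq> 0"
  shows "(h,v) \<in> D1 n" "E = Es n h"
proof -
  let ?cv = "\<lambda>i j. h i j \<noteq> h i (Suc j)"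
  have R: "Rs n E i = 2 * n - 1" if i: "i < n" for i
  proof -
    have "fst (expo n E) i = fst (topm n) i" using ex by simp
    then have "Rs n E i - 1 = 2 * (n - 1)" using i by (simp add: expo_def topm_def)
    moreover obtain n' where "n = Suc n'" using i by (cases n) auto
    ultimately show ?thesis using Rs_bounds(1)[OF s E c i] by simp
  qed
  have rowinfo: "(\<forall>j<n. E (i,j) = (if ?cv i j then 1 else 2)) \<and> (\<exists>p<n. \<forall>j<n. ?cv i j \<longleftrightarrow> j = p)" if i: "i < n" for i
  proof -
    have le: "Rs n E i \<le> (\<Sum>j<n. if ?cv i j then 1 else 2)" using Rs_bounds(2)[OF s E c i] .
    have tot: "(\<Sum>j<n. if ?cv i j then 1 else 2) + (\<Sum>j<n. of_bool (?cv i j)) = 2 * n"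
      using sum_bound12[of "{..<n}" "?cv i"] by (simp only: finite_lessThan card_lessThan simp_thms)
    obtain j0 where j0: "j0 < n" "?cv i j0" using row_cv[OF s i] by blast
    have ge1: "1 \<le> (\<Sum>j<n. of_bool (?cv i j) :: nat)" by (rule sum_ofbool_ge1) (use j0 in auto)
    have cnt: "(\<Sum>j<n. of_bool (?cv i j) :: nat) \<le> 1" using le tot R[OF i] by linarith
    have eqs: "(\<Sum>j<n. if ?cv i j then 1 else 2) \<le> Rs n E i" using le tot R[OF i] ge1 by linarith
    have "\<forall>j<n. E (i,j) = (if ?cv i j then 1 else 2)"
    proof (intro allI impI)
      fix j assume j: "j < n"
      show "E (i,j) = (if ?cv i j then 1 else 2)"
        using sum_le_eq[of "{..<n}" "\<lambda>j. E (i,j)" "\<lambda>j. if ?cv i j then 1 else 2" j] coef_nz(1)[OF s E c i] eqs j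
        unfolding Rs_def by auto
    qed
    moreover have "\<forall>j<n. ?cv i j \<longleftrightarrow> j = j0"
    proof (intro allI impI)
      fix j assume jn: "j < n"
      show "?cv i j \<longleftrightarrow> j = j0"
        by (rule unique_cv[OF finite_lessThan _ j0(2) cnt]) (use j0(1) jn in simp_all)
    qed
    ultimately show ?thesis using j0 by blast
  qed
  show "E = Es n h"
  proof
    fix k show "E k = Es n h k"
    proof (cases "k \<in> II n")
      case True
      obtain i j where k: "k = (i,j)" using surj_pair[of k] by blast
      have ij: "i < n" "j < n" using True unfolding k II_def by simp_all
      have e1: "E (i,j) = (if ?cv i j then 1 else 2)" using rowinfo[OF ij(1)] ij(2) by blast
      have e2: "Es n h (i,j) = (if ?cv i j then 1 else 2)" using ij by (simp add: Es_def II_def)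
      show ?thesis using e1 e2 k by simp
    next
      case False
      have "E k = undefined" using PiE_arb[OF E[unfolded EE_def] False] .
      moreover have "Es n h k = undefined" using False by (simp add: Es_def)
      ultimately show ?thesis by simp
    qed
  qed
  have "\<forall>i<n. \<exists>p<n. \<forall>j\<le>n. h i j = (j \<le> p)"
  proof (intro allI impI)
    fix i assume i: "i < n"
    obtain p where p: "p < n" "\<forall>j<n. ?cv i j \<longleftrightarrow> j = p" using conjunct2[OF rowinfo[OF i]] by blast
    have hb: "\<forall>i<n. h i 0 \<and> \<not> h i n" using s by (simp add: dwbc_states_def)
    have h0: "h i 0" and hn: "\<not> h i n" using hb i by auto
    have "\<forall>j\<le>n. h i j = (j \<le> p)"
    proof (intro allI impI)
      fix j assume "j \<le> n"
      then show "h i j = (j \<le> p)" by (rule step_fun[of "h i" n p j, OF h0 hn p(1) p(2)])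
    qed
    then show "\<exists>p<n. \<forall>j\<le>n. h i j = (j \<le> p)" using p(1) by blast
  qed
  then show "(h,v) \<in> D1 n" using s unfolding D1_def mem_Collect_eq fst_conv by blast
qed

lemma D1_Es:
  assumes s: "(h,v) \<in> D1 n"
  shows "expo n (Es n h) = topm n"
proof -
  let ?cv = "\<lambda>i j. h i j \<noteq> h i (Suc j)"
  have dw: "(h,v) \<in> dwbc_states n" using s by (simp add: D1_def)
  have rc: "(\<Sum>j<n. of_bool (?cv i j) :: nat) = 1" if i: "i < n" for i
  proof -
    obtain p where p: "p < n" "\<forall>j\<le>n. h i j = (j \<le> p)" using s i by (auto simp: D1_def)
    have "(\<Sum>j<n. of_bool (?cv i j) :: nat) = (\<Sum>j<n. of_bool (j = p))"
      by (intro sum.cong refl) (use p in auto)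
    also have "\<dots> = 1" using p by (simp add: sum_ofbool_card)
    finally show ?thesis .
  qed
  have R: "Rs n (Es n h) i = 2 * n - 1" if i: "i < n" for i
    using Rs_Es[OF i, of h] sum_bound12[of "{..<n}" "?cv i"] rc[OF i] by simp
  have cc1: "1 \<le> (\<Sum>i<n. of_bool (?cv i j) :: nat)" if j: "j < n" for j
  proof -
    obtain i0 where "i0 < n" "?cv i0 j" using col_cv[OF dw j] by blast
    then show ?thesis using sum_ofbool_ge1[of "{..<n}" i0 "\<lambda>i. ?cv i j"] by simp
  qed
  have "(\<Sum>j<n. \<Sum>i<n. of_bool (?cv i j) :: nat) = (\<Sum>i<n. \<Sum>j<n. of_bool (?cv i j))" by (rule sum.swap)
  also have "\<dots> = (\<Sum>i<n. 1)" using rc by simp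
  finally have tot: "(\<Sum>j<n. \<Sum>i<n. of_bool (?cv i j) :: nat) \<le> (\<Sum>j<n. 1)" by simp
  have cc: "(\<Sum>i<n. of_bool (?cv i j) :: nat) = 1" if j: "j < n" for j
    using sum_le_eq[of "{..<n}" "\<lambda>_. 1" "\<lambda>j. \<Sum>i<n. of_bool (?cv i j) :: nat" j] cc1 tot j by auto
  have C: "Cs n (Es n h) j = 2 * n - 1" if j: "j < n" for j
    using Cs_Es[OF j, of h] sum_bound12[of "{..<n}" "\<lambda>i. ?cv i j"] cc[OF j] by simp
  show ?thesis
  proof -
    have R': "Rs n (Es n h) i - 1 = 2 * (n - 1)" if "i < n" for i using R[OF that] that by arith
    have "fst (expo n (Es n h)) = fst (topm n)" using R' by (auto simp: expo_def topm_def)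
    moreover have "snd (expo n (Es n h)) = snd (topm n)" using C by (auto simp: expo_def topm_def)
    ultimately show ?thesis by (simp add: prod_eq_iff)
  qed
qed

lemma top_coef:
  assumes n: "n \<ge> 1" and a: "a \<noteq> 0"
  shows "cf a n (topm n) = Cn n a"
proof -
  have inner: "(\<Sum>E\<in>{E\<in>EE n. expo n E = topm n}. coef a n (fst s) (snd s) E)
      = (if s \<in> D1 n then Wt a n n (fst s) (snd s) else 0)" if s: "s \<in> dwbc_states n" for s
  proof -
    obtain h v where hv: "s = (h,v)" by (cases s) auto
    have sd: "(h,v) \<in> dwbc_states n" using s hv by simp
    have fin: "finite {E\<in>EE n. expo n E = topm n}" using fin_EE by simp
    show ?thesis
    proof (cases "s \<in> D1 n")
      case True
      then have D: "(h,v) \<in> D1 n" using hv by simp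
      have mem: "Es n h \<in> {E\<in>EE n. expo n E = topm n}" using Es_EE D1_Es[OF D] by simp
      have "(\<Sum>E\<in>{E\<in>EE n. expo n E = topm n}. coef a n h v E)
          = coef a n h v (Es n h) + (\<Sum>E\<in>{E\<in>EE n. expo n E = topm n} - {Es n h}. coef a n h v E)"
        using fin mem by (simp add: sum.remove)
      also have "(\<Sum>E\<in>{E\<in>EE n. expo n E = topm n} - {Es n h}. coef a n h v E) = 0"
      proof (rule sum.neutral, rule ballI, rule ccontr)
        fix E assume "E \<in> {E\<in>EE n. expo n E = topm n} - {Es n h}" "coef a n h v E \<noteq> 0"
        then show False using fib_char(2)[OF sd] by auto
      qed
      finally show ?thesis using True hv by (simp add: coef_Es)
    next
      case False
      have "(\<Sum>E\<in>{E\<in>EE n. expo n E = topm n}. coef a n h v E) = 0"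
      proof (rule sum.neutral, rule ballI, rule ccontr)
        fix E assume "E \<in> {E\<in>EE n. expo n E = topm n}" "coef a n h v E \<noteq> 0"
        then show False using fib_char(1)[OF sd] False hv by auto
      qed
      then show ?thesis using False hv by simp
    qed
  qed
  have "cf a n (topm n) = (\<Sum>s\<in>dwbc_states n. if s \<in> D1 n then Wt a n n (fst s) (snd s) else 0)"
    unfolding cf_def by (rule sum.cong[OF refl inner])
  also have "\<dots> = (\<Sum>s\<in>D1 n. Wt a n n (fst s) (snd s))"
    using fin_dwbc by (simp add: sum.inter_filter[symmetric] D1_def)
  also have "\<dots> = Fcl a n n {..<n}" unfolding D1_G by (rule G_sum[OF a]) auto
  also have "\<dots> = Cn n a" by (rule Fcl_full[OF a])
  finally show ?thesis .
qed

theorem lemma4: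
  fixes n :: nat and a :: complex
  assumes "n \<ge> 1" and "a \<noteq> 0"
  shows "\<exists>c :: ((nat \<Rightarrow> nat) \<times> (nat \<Rightarrow> nat)) \<Rightarrow> complex.
           finite {m. c m \<noteq> 0} \<and>
           (\<forall>m. c m \<noteq> 0 \<longrightarrow> (\<forall>i\<ge>n. fst m i = 0 \<and> snd m i = 0)) \<and>
           (\<forall>x y. (\<forall>i<n. x i \<noteq> 0 \<and> y i \<noteq> 0) \<longrightarrow>
              Ztilde n a x y = (\<Sum>m\<in>{m. c m \<noteq> 0}. c m * (\<Prod>i<n. x i ^ fst m i * y i ^ snd m i))) \<and>
           c (\<lambda>i. if i < n then 2 * (n - 1) else 0, \<lambda>_. 0) = Cn n a \<and>
           (\<forall>m. c m \<noteq> 0 \<longrightarrow> m \<noteq> (\<lambda>i. if i < n then 2 * (n - 1) else 0, \<lambda>_. 0) \<longrightarrow>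
              (\<Sum>i<n. fst m i) < 2 * n * (n - 1))"
proof (intro exI[of _ "cf a n"] conjI allI impI)
  show "finite {m. cf a n m \<noteq> 0}" by (rule fin_supp)
next
  fix m i assume "cf a n m \<noteq> 0" "n \<le> i"
  then obtain E where "expo n E = m" using cf_support by blast
  then show "fst m i = 0" "snd m i = 0" using \<open>n \<le> i\<close> by (auto simp: expo_def)
next
  fix x y :: "nat \<Rightarrow> complex" assume "\<forall>i<n. x i \<noteq> 0 \<and> y i \<noteq> 0"
  then show "Ztilde n a x y = (\<Sum>m\<in>{m. cf a n m \<noteq> 0}. cf a n m * (\<Prod>i<n. x i ^ fst m i * y i ^ snd m i))"
    using rep unfolding mnm_def by blast
next
  show "cf a n (\<lambda>i. if i < n then 2 * (n - 1) else 0, \<lambda>_. 0) = Cn n a"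
    using top_coef[OF assms] by (simp add: topm_def)
next
  fix m assume "cf a n m \<noteq> 0" "m \<noteq> (\<lambda>i. if i < n then 2 * (n - 1) else 0, \<lambda>_. 0)"
  then show "(\<Sum>i<n. fst m i) < 2 * n * (n - 1)" using degree by (simp add: topm_def)
qed

end
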